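(* Let $G = (V,E)$ be an $n$-vertex graph. There exists a partition $V = V_1 \cup \ldots \cup V_t$ of $V$ such that: (i) $t \leq 19\,\alpha(G) \log n$; (ii) $\sum_{i \in J} |V_i| \geq n/2$, where $J := \{i \in [t] : |V_i| \geq 0.1\, n/\alpha(G)\}$; (iii) $|V_i| \geq \delta(G)/\log n$ for every $i \in [t]$; (iv) $\kappa(G[V_i]) \geq \frac{\delta(G)}{20\,\alpha(G) \log n}$ for every $i \in [t]$.
   Context: $\alpha(G)$ is the independence number, $\delta(G)$ the minimum degree, and $\kappa(H)$ the vertex connectivity of a graph $H$ (the smallest size of a vertex set whose removal disconnects $H$ or leaves a single vertex). $G[V_i]$ is the induced subgraph. *)

theory Defs
  imports Complex_Main
begin

definition simple_graph :: "'a set \<Rightarrow> ('a \<Rightarrow> 'a \<Rightarrow> bool) \<Rightarrow> bool" where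
  "simple_graph V E \<longleftrightarrow> finite V \<and> (\<forall>u v. E u v \<longrightarrow> E v u) \<and> (\<forall>v. \<not> E v v)
     \<and> (\<forall>u v. E u v \<longrightarrow> u \<in> V \<and> v \<in> V)"

definition independent_set :: "'a set \<Rightarrow> ('a \<Rightarrow> 'a \<Rightarrow> bool) \<Rightarrow> 'a set \<Rightarrow> bool" where
  "independent_set V E I \<longleftrightarrow> I \<subseteq> V \<and> (\<forall>u\<in>I. \<forall>v\<in>I. \<not> E u v)"

definition indep_num :: "'a set \<Rightarrow> ('a \<Rightarrow> 'a \<Rightarrow> bool) \<Rightarrow> nat" where
  "indep_num V E = Max {card I | I. independent_set V E I}"

definition degree :: "'a set \<Rightarrow> ('a \<Rightarrow> 'a \<Rightarrow> bool) \<Rightarrow> 'a \<Rightarrow> nat" where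
  "degree V E v = card {u \<in> V. E v u}"

definition min_degree :: "'a set \<Rightarrow> ('a \<Rightarrow> 'a \<Rightarrow> bool) \<Rightarrow> nat" where
  "min_degree V E = Min (degree V E ` V)"

definition connected_on :: "'a set \<Rightarrow> ('a \<Rightarrow> 'a \<Rightarrow> bool) \<Rightarrow> bool" where
  "connected_on S E \<longleftrightarrow>
     (\<forall>u\<in>S. \<forall>v\<in>S. (\<lambda>x y. x \<in> S \<and> y \<in> S \<and> E x y)\<^sup>*\<^sup>* u v)"

definition vertex_connectivity :: "'a set \<Rightarrow> ('a \<Rightarrow> 'a \<Rightarrow> bool) \<Rightarrow> nat" where
  "vertex_connectivity S E =
     Min {card X | X. X \<subseteq> S \<and> (\<not> connected_on (S - X) E \<or> card (S - X) = 1)}"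

end

theory Submission
  imports Defs
begin

definition kconn :: "'a set \<Rightarrow> ('a \<Rightarrow> 'a \<Rightarrow> bool) \<Rightarrow> real \<Rightarrow> bool" where
  "kconn S E k \<longleftrightarrow> (\<forall>X. X \<subseteq> S \<longrightarrow> real (card X) < k \<longrightarrow>
      connected_on (S - X) E \<and> card (S - X) \<noteq> 1)"

lemma kconn_vc:
  assumes "finite S" "S \<noteq> {}" "kconn S E k"
  shows "k \<le> real (vertex_connectivity S E)"
proof -
  define M where "M = {card X | X. X \<subseteq> S \<and> (\<not> connected_on (S - X) E \<or> card (S - X) = 1)}"
  obtain v where v: "v \<in> S" using assms(2) by auto
  have "S - (S - {v}) = {v}" using v by auto
  then have "card (S - {v}) \<in> M" unfolding M_def by auto
  then have ne: "M \<noteq> {}" by auto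
  have "M \<subseteq> {0..card S}" unfolding M_def using assms(1) by (auto intro: card_mono)
  then have fin: "finite M" using finite_subset by blast
  have "Min M \<in> M" using Min_in[OF fin ne] .
  then obtain X where X: "X \<subseteq> S" "\<not> connected_on (S - X) E \<or> card (S - X) = 1" "card X = Min M"
    unfolding M_def by auto
  have "\<not> real (card X) < k" using assms(3) X(1,2) unfolding kconn_def by blast
  then show ?thesis using X(3) unfolding vertex_connectivity_def M_def by simp
qed

lemma reach_mono:
  assumes "(\<lambda>x y. x \<in> S \<and> y \<in> S \<and> E x y)\<^sup>*\<^sup>* a b" "S \<subseteq> T"
  shows "(\<lambda>x y. x \<in> T \<and> y \<in> T \<and> E x y)\<^sup>*\<^sup>* a b"
  using assms
  by (induction rule: rtranclp_induct) (auto intro: rtranclp.rtrancl_into_rtrancl)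

lemma kconn_insert:
  assumes "kconn H E k" "v \<notin> H" "finite H" "k \<le> real (card {u\<in>H. E v u})"
    and sym: "\<forall>x y. E x y \<longrightarrow> E y x"
  shows "kconn (insert v H) E k"
  unfolding kconn_def
proof (intro allI impI)
  fix X assume X: "X \<subseteq> insert v H" "real (card X) < k"
  show "connected_on (insert v H - X) E \<and> card (insert v H - X) \<noteq> 1"
  proof (cases "v \<in> X")
    case True
    have "X - {v} \<subseteq> H" using X by auto
    moreover have "card (X - {v}) \<le> card X"
      using X(1) assms(3) by (intro card_mono) (auto intro: finite_subset)
    ultimately have "connected_on (H - (X - {v})) E \<and> card (H - (X - {v})) \<noteq> 1"
      using assms(1) X(2) unfolding kconn_def by fastforce
    moreover have "insert v H - X = H - (X - {v})" using True assms(2) by auto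
    ultimately show ?thesis by simp
  next
    case False
    then have XH: "X \<subseteq> H" using X by auto
    define S where "S = H - X"
    have S: "connected_on S E" "card S \<noteq> 1"
      using assms(1) X(2) XH unfolding kconn_def S_def by auto
    have finX: "finite X" using finite_subset[OF XH assms(3)] .
    have "\<exists>u\<in>S. E v u"
    proof (rule ccontr)
      assume "\<not> ?thesis"
      then have "{u\<in>H. E v u} \<subseteq> X" unfolding S_def by auto
      then have "card {u\<in>H. E v u} \<le> card X" using finX by (rule card_mono[rotated])
      then show False using X(2) assms(4) by linarith
    qed
    then obtain u where u: "u \<in> S" "E v u" by auto
    have finS: "finite S" unfolding S_def using assms(3) by auto
    have "card S \<ge> 1" using u(1) finS by (metis One_nat_def Suc_leI card_gt_0_iff empty_iff)
    then have "card S \<ge> 2" using S(2) by linarith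
    moreover have "v \<notin> S" unfolding S_def using assms(2) by auto
    ultimately have c: "card (insert v S) \<noteq> 1" using finS by (metis card.empty card_insert_disjoint nat.inject not_numeral_le_zero numeral_2_eq_2 One_nat_def)
    have eq: "insert v H - X = insert v S" unfolding S_def using False by auto
    let ?R = "\<lambda>x y. x \<in> insert v S \<and> y \<in> insert v S \<and> E x y"
    have to_u: "?R\<^sup>*\<^sup>* a u \<and> ?R\<^sup>*\<^sup>* u a" if "a \<in> insert v S" for a
    proof (cases "a = v")
      case True
      have "?R v u" "?R u v" using u sym by auto
      then show ?thesis using True by auto
    next
      case False
      then have a: "a \<in> S" using that by auto
      have "(\<lambda>x y. x \<in> S \<and> y \<in> S \<and> E x y)\<^sup>*\<^sup>* a u"
           "(\<lambda>x y. x \<in> S \<and> y \<in> S \<and> E x y)\<^sup>*\<^sup>* u a"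
        using S(1) a u(1) unfolding connected_on_def by auto
      then show ?thesis using reach_mono[of S E _ _ "insert v S"] by blast
    qed
    have "connected_on (insert v S) E"
      unfolding connected_on_def
    proof (intro ballI)
      fix a b assume "a \<in> insert v S" "b \<in> insert v S"
      then show "?R\<^sup>*\<^sup>* a b" using to_u by (meson rtranclp_trans)
    qed
    then show ?thesis using c eq by simp
  qed
qed

lemma kconn_add_set:
  assumes "finite S" "finite W" "kconn W E k" "S \<inter> W = {}"
    "\<forall>s\<in>S. k \<le> real (card {u\<in>W. E s u})" "\<forall>x y. E x y \<longrightarrow> E y x"
  shows "kconn (W \<union> S) E k"
  using assms
proof (induction S rule: finite_induct)
  case empty
  then show ?case by simp
next
  case (insert s S)
  have IH: "kconn (W \<union> S) E k" using insert by auto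
  have "card {u\<in>W. E s u} \<le> card {u\<in>W \<union> S. E s u}"
    using insert(1) assms(2) by (intro card_mono) auto
  then have "k \<le> real (card {u\<in>W \<union> S. E s u})" using insert(7) by force
  moreover have "s \<notin> W \<union> S" using insert by auto
  ultimately have "kconn (insert s (W \<union> S)) E k"
    using kconn_insert[OF IH] insert(1) assms(2,6) by blast
  then show ?case by simp
qed

lemma split_disconn:
  assumes "\<not> connected_on S E" "\<forall>x y. E x y \<longrightarrow> E y x"
  shows "\<exists>A B. A \<noteq> {} \<and> B \<noteq> {} \<and> A \<union> B = S \<and> A \<inter> B = {} \<and>
     (\<forall>a\<in>A. \<forall>b\<in>B. \<not> E a b \<and> \<not> E b a)"
proof -
  let ?R = "\<lambda>x y. x \<in> S \<and> y \<in> S \<and> E x y"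
  obtain u v where uv: "u \<in> S" "v \<in> S" "\<not> ?R\<^sup>*\<^sup>* u v"
    using assms(1) unfolding connected_on_def by auto
  define A where "A = {w\<in>S. ?R\<^sup>*\<^sup>* u w}"
  have "u \<in> A" using uv unfolding A_def by auto
  moreover have "v \<in> S - A" using uv unfolding A_def by auto
  moreover have "\<not> E a b \<and> \<not> E b a" if "a \<in> A" "b \<in> S - A" for a b
  proof -
    have nE: "\<not> E a b"
    proof
      assume "E a b"
      then have "?R a b" using that unfolding A_def by auto
      then have "?R\<^sup>*\<^sup>* u b" using that unfolding A_def
        by (auto intro: rtranclp.rtrancl_into_rtrancl)
      then show False using that unfolding A_def by auto
    qed
    then show ?thesis using assms(2) by blast
  qed
  moreover have "A \<subseteq> S" unfolding A_def by auto
  ultimately show ?thesis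
    by (intro exI[of _ A] exI[of _ "S - A"]) auto
qed


definition config :: "'a set \<Rightarrow> ('a \<Rightarrow> 'a \<Rightarrow> bool) \<Rightarrow> real \<Rightarrow> 'a set set \<Rightarrow> 'a set \<Rightarrow> bool" where
  "config V E k \<W> R \<longleftrightarrow> finite \<W> \<and> {} \<notin> \<W> \<and>
     (\<forall>A\<in>\<W>. \<forall>B\<in>\<W>. A \<noteq> B \<longrightarrow> A \<inter> B = {} \<and> (\<forall>u\<in>A. \<forall>v\<in>B. \<not> E u v)) \<and>
     \<Union>\<W> \<union> R = V \<and> R \<inter> \<Union>\<W> = {} \<and> real (card R) + k \<le> real (card \<W>) * k"

lemma configD:
  assumes "config V E k \<W> R"
  shows "finite \<W>" "{} \<notin> \<W>"
    "\<And>A B. A \<in> \<W> \<Longrightarrow> B \<in> \<W> \<Longrightarrow> A \<noteq> B \<Longrightarrow> A \<inter> B = {}"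
    "\<And>A B u v. A \<in> \<W> \<Longrightarrow> B \<in> \<W> \<Longrightarrow> A \<noteq> B \<Longrightarrow> u \<in> A \<Longrightarrow> v \<in> B \<Longrightarrow> \<not> E u v"
    "\<Union>\<W> \<union> R = V" "R \<inter> \<Union>\<W> = {}" "real (card R) + k \<le> real (card \<W>) * k"
  using assms unfolding config_def by blast+

lemma indep_le:
  assumes "simple_graph V E" "independent_set V E I"
  shows "card I \<le> indep_num V E"
proof -
  have fin: "finite V" using assms(1) unfolding simple_graph_def by auto
  have "{card I | I. independent_set V E I} \<subseteq> card ` Pow V"
    unfolding independent_set_def by auto
  then have "finite {card I | I. independent_set V E I}"
    using fin finite_subset by blast
  then show ?thesis unfolding indep_num_def using assms(2) by (auto intro: Max_ge)
qed

lemma config_card_le: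
  assumes "simple_graph V E" "config V E k \<W> R"
  shows "card \<W> \<le> indep_num V E"
proof -
  define f where "f W = (SOME x. x \<in> W)" for W :: "'a set"
  have fW: "f W \<in> W" if "W \<in> \<W>" for W
  proof -
    have "W \<noteq> {}" using configD(2)[OF assms(2)] that by auto
    then have "\<exists>x. x \<in> W" by auto
    then show ?thesis unfolding f_def by (rule someI_ex)
  qed
  have dj: "A \<inter> B = {}" if "A \<in> \<W>" "B \<in> \<W>" "A \<noteq> B" for A B
    using configD(3)[OF assms(2) that] .
  have inj: "inj_on f \<W>"
  proof (rule inj_onI)
    fix A B assume AB: "A \<in> \<W>" "B \<in> \<W>" "f A = f B"
    show "A = B"
    proof (rule ccontr)
      assume "A \<noteq> B"
      then have "A \<inter> B = {}" using dj AB by simp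
      moreover have "f A \<in> A \<inter> B" using fW[OF AB(1)] fW[OF AB(2)] AB(3) by simp
      ultimately show False by simp
    qed
  qed
  have VV: "\<Union>\<W> \<subseteq> V" using configD(5)[OF assms(2)] by auto
  have irr: "\<not> E x x" for x using assms(1) unfolding simple_graph_def by simp
  have "independent_set V E (f ` \<W>)"
    unfolding independent_set_def
  proof (intro conjI ballI)
    show "f ` \<W> \<subseteq> V"
    proof
      fix x assume "x \<in> f ` \<W>"
      then obtain A where "A \<in> \<W>" "x = f A" by auto
      then have "x \<in> \<Union>\<W>" using fW by auto
      then show "x \<in> V" using VV by auto
    qed
  next
    fix a b assume "a \<in> f ` \<W>" "b \<in> f ` \<W>"
    then obtain A B where AB: "A \<in> \<W>" "B \<in> \<W>" "a = f A" "b = f B" by auto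
    show "\<not> E a b"
    proof (cases "A = B")
      case True
      then show ?thesis using AB irr by simp
    next
      case False
      show ?thesis using configD(4)[OF assms(2) AB(1) AB(2) False fW[OF AB(1)] fW[OF AB(2)]] AB(3,4)
        by simp
    qed
  qed
  then have "card (f ` \<W>) \<le> indep_num V E" using indep_le assms(1) by blast
  then show ?thesis using card_image[OF inj] by simp
qed

lemma config_nbrs:
  assumes "simple_graph V E" "config V E k \<W> R" "W \<in> \<W>" "v \<in> W"
  shows "{u\<in>V. E v u} \<subseteq> (W - {v}) \<union> R"
proof
  fix u assume u: "u \<in> {u\<in>V. E v u}"
  then have "u \<noteq> v" using assms(1) unfolding simple_graph_def by auto
  moreover have "u \<in> \<Union>\<W> \<union> R" using u configD(5)[OF assms(2)] by auto
  moreover have "u \<notin> B" if "B \<in> \<W>" "B \<noteq> W" for B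
    using configD(4)[OF assms(2)] assms(3,4) that u by blast
  ultimately show "u \<in> (W - {v}) \<union> R" by blast
qed

lemma mindeg_le:
  assumes "simple_graph V E" "v \<in> V"
  shows "min_degree V E \<le> card {u\<in>V. E v u}"
proof -
  have "finite V" using assms(1) unfolding simple_graph_def by auto
  then show ?thesis unfolding min_degree_def degree_def using assms(2) by (auto intro: Min_le)
qed

lemma exists_good:
  assumes G: "simple_graph V E" and cf: "config V E k \<W> R"
    and kdef: "k = real (min_degree V E) / (20 * real (indep_num V E) * L)"
    and L: "L \<ge> 1/2"
  shows "\<exists>\<W>' R'. config V E k \<W>' R' \<and> (\<forall>W\<in>\<W>'. kconn W E k)"
  using cf
proof (induction "indep_num V E + 1 - card \<W>" arbitrary: \<W> R rule: less_induct)
  case less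
  note cf = less.prems
  define d where "d = real (min_degree V E)"
  define a where "a = real (indep_num V E)"
  have fin: "finite V" and sym: "\<forall>x y. E x y \<longrightarrow> E y x"
    using G unfolding simple_graph_def by auto
  have cle: "card \<W> \<le> indep_num V E" using config_card_le[OF G cf] .
  have d0: "d \<ge> 0" unfolding d_def by simp
  show ?case
  proof (cases "\<forall>W\<in>\<W>. kconn W E k")
    case True
    then show ?thesis using cf by blast
  next
    case False
    then obtain W where W: "W \<in> \<W>" "\<not> kconn W E k" by blast
    then obtain X where X: "X \<subseteq> W" "real (card X) < k"
      "\<not> connected_on (W - X) E \<or> card (W - X) = 1"
      unfolding kconn_def by blast
    have WV: "W \<subseteq> V" using W(1) configD(5)[OF cf] by auto
    have finW: "finite W" using finite_subset[OF WV fin] .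
    have k0: "k \<ge> 0" using kdef L by simp
    have kpos: "k > 0" using X(2) by linarith
    have apos: "a > 0"
    proof -
      have "card \<W> > 0" using W(1) configD(1)[OF cf] by (auto simp: card_gt_0_iff)
      then show ?thesis using cle unfolding a_def by simp
    qed
    have ak: "a * k = d / (20 * L)" unfolding kdef d_def[symmetric] a_def[symmetric]
      using apos L by (simp add: field_simps)
    have Rb: "real (card R) + k \<le> real (card \<W>) * k" using configD(7)[OF cf] .
    have "real (card \<W>) * k \<le> a * k" using cle k0 unfolding a_def by (simp add: mult_right_mono)
    then have Rb2: "real (card R) + k \<le> d / (20 * L)" using Rb ak by linarith
    show ?thesis
    proof (cases "card (W - X) = 1")
      case True
      then obtain v where v: "W - X = {v}" by (auto simp: card_Suc_eq)
      then have vW: "v \<in> W" by auto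
      have sub: "{u\<in>V. E v u} \<subseteq> X \<union> R" using config_nbrs[OF G cf W(1) vW] v by auto
      have finR: "finite R" using configD(5)[OF cf] by (intro finite_subset[OF _ fin]) auto
      have finX: "finite X" using finite_subset[OF X(1) finW] .
      have "card {u\<in>V. E v u} \<le> card (X \<union> R)" using sub finR finX by (intro card_mono) auto
      also have "\<dots> \<le> card X + card R" by (rule card_Un_le)
      moreover have "v \<in> V" using vW WV by auto
      ultimately have "min_degree V E \<le> card X + card R"
        using mindeg_le[OF G] by (meson le_trans)
      then have "d \<le> real (card X) + real (card R)" unfolding d_def by linarith
      then have "d < d / (20 * L)" using X(2) Rb2 by linarith
      moreover have "d / (20 * L) \<le> d / 1" using d0 L by (intro divide_left_mono) auto
      ultimately show ?thesis by linarith
    next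
      case False
      then have "\<not> connected_on (W - X) E" using X(3) by auto
      then obtain A B where AB: "A \<noteq> {}" "B \<noteq> {}" "A \<union> B = W - X" "A \<inter> B = {}"
        "\<forall>a\<in>A. \<forall>b\<in>B. \<not> E a b \<and> \<not> E b a"
        using split_disconn[OF \<open>\<not> connected_on (W - X) E\<close> sym] by blast
      define \<W>' where "\<W>' = insert A (insert B (\<W> - {W}))"
      define R' where "R' = R \<union> X"
      have CW: "C \<inter> W = {}" if "C \<in> \<W> - {W}" for C
        using configD(3)[OF cf _ W(1)] that by blast
      have Aout: "A \<notin> \<W> - {W}" and Bout: "B \<notin> \<W> - {W}"
      proof -
        note CW
        then show "A \<notin> \<W> - {W}" "B \<notin> \<W> - {W}" using AB by blast+
      qed
      have AneB: "A \<noteq> B" using AB by blast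
      have finWW: "finite \<W>" using configD(1)[OF cf] .
      have cW': "card \<W>' = card \<W> + 1"
      proof -
        have "card \<W>' = card (\<W> - {W}) + 2" unfolding \<W>'_def using Aout Bout AneB finWW by simp
        moreover have "card \<W> > 0" using W(1) finWW card_gt_0_iff by blast
        moreover have "card (\<W> - {W}) = card \<W> - 1" using card_Diff_singleton[OF W(1)] .
        ultimately show ?thesis by simp
      qed
      have finR: "finite R" using configD(5)[OF cf] by (intro finite_subset[OF _ fin]) auto
      have finX: "finite X" using finite_subset[OF X(1) finW] .
      have XR: "X \<inter> R = {}" using X(1) W(1) configD(6)[OF cf] by blast
      have cR': "card R' = card R + card X" unfolding R'_def using finR finX XR
        by (simp add: card_Un_disjoint inf_commute)
      have cf': "config V E k \<W>' R'"
        unfolding config_def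
      proof (intro conjI)
        show "finite \<W>'" unfolding \<W>'_def using finWW by simp
        show "{} \<notin> \<W>'" unfolding \<W>'_def using AB configD(2)[OF cf] by auto
        show "\<forall>C\<in>\<W>'. \<forall>D\<in>\<W>'. C \<noteq> D \<longrightarrow> C \<inter> D = {} \<and> (\<forall>u\<in>C. \<forall>v\<in>D. \<not> E u v)"
        proof (intro ballI impI)
          fix C D assume C: "C \<in> \<W>'" and D: "D \<in> \<W>'" and CD: "C \<noteq> D"
          have sub: "\<exists>C0\<in>\<W>. C \<subseteq> C0 \<and> ((C0 = W \<and> (C = A \<or> C = B)) \<or> (C0 \<noteq> W \<and> C = C0))"
            if "C \<in> \<W>'" for C
          proof -
            have "C = A \<or> C = B \<or> C \<in> \<W> - {W}" using that unfolding \<W>'_def by blast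
            moreover have "A \<subseteq> W" "B \<subseteq> W" using AB(3) by blast+
            ultimately show ?thesis using W(1) by blast
          qed
          obtain C0 where C0: "C0 \<in> \<W>" "C \<subseteq> C0" "(C0 = W \<and> (C = A \<or> C = B)) \<or> (C0 \<noteq> W \<and> C = C0)"
            using sub[OF C] by blast
          obtain D0 where D0: "D0 \<in> \<W>" "D \<subseteq> D0" "(D0 = W \<and> (D = A \<or> D = B)) \<or> (D0 \<noteq> W \<and> D = D0)"
            using sub[OF D] by blast
          show "C \<inter> D = {} \<and> (\<forall>u\<in>C. \<forall>v\<in>D. \<not> E u v)"
          proof (cases "C0 = D0")
            case True
            then have "C0 = W"
              using C0(3) D0(3) CD by blast
            then have "(C = A \<and> D = B) \<or> (C = B \<and> D = A)" using C0(3) D0(3) True CD by blast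
            then show ?thesis using AB(4,5) by blast
          next
            case False
            have "C0 \<inter> D0 = {}" using configD(3)[OF cf C0(1) D0(1) False] .
            moreover have "\<forall>u\<in>C. \<forall>v\<in>D. \<not> E u v"
              using configD(4)[OF cf C0(1) D0(1) False] C0(2) D0(2) by blast
            ultimately show ?thesis using C0(2) D0(2) by blast
          qed
        qed
        show "\<Union>\<W>' \<union> R' = V"
        proof -
          have "\<Union>\<W>' = \<Union>(\<W> - {W}) \<union> (W - X)" unfolding \<W>'_def using AB(3) by auto
          moreover have "\<Union>\<W> = \<Union>(\<W> - {W}) \<union> W" using W(1) by auto
          ultimately show ?thesis using configD(5)[OF cf] X(1) W(1) unfolding R'_def by auto
        qed
        show "R' \<inter> \<Union>\<W>' = {}"
        proof -
          have "\<Union>\<W>' = \<Union>(\<W> - {W}) \<union> (W - X)" unfolding \<W>'_def using AB(3) by auto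
          moreover have "X \<inter> \<Union>(\<W> - {W}) = {}" using X(1) CW by blast
          ultimately show ?thesis using configD(6)[OF cf] W(1) unfolding R'_def by blast
        qed
        show "real (card R') + k \<le> real (card \<W>') * k"
          using cR' cW' Rb X(2) by (simp add: algebra_simps)
      qed
      have "card \<W>' \<le> indep_num V E" using config_card_le[OF G cf'] .
      then have "indep_num V E + 1 - card \<W>' < indep_num V E + 1 - card \<W>" using cW' by simp
      then show ?thesis by (rule less.hyps[OF _ cf'])
    qed
  qed
qed

lemma ln2_bound: "ln (2::real) \<ge> 21/40"
proof -
  have "exp (21/40::real) \<le> 1 + 21/40 + (21/40)\<^sup>2" by (rule exp_bound) auto
  also have "\<dots> \<le> 2" by (simp add: power2_eq_square)
  finally show ?thesis by (subst ln_ge_iff) auto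
qed

lemma ln3_bound: "ln (3::real) \<ge> 1"
  using exp_le by (subst ln_ge_iff) auto

lemma numeric:
  fixes n :: nat and d :: real
  assumes "n \<ge> 2" "0 \<le> d" "d \<le> real n - 1"
  shows "d / ln (real n) \<le> d + 1 - d / (20 * ln (real n))"
proof -
  define L where "L = ln (real n)"
  have L2: "L \<ge> ln 2" unfolding L_def using assms(1) by simp
  have Lpos: "L > 0" using L2 ln2_bound by linarith
  have key: "d * (21/20 - L) \<le> L"
  proof (cases "n \<ge> 4")
    case True
    have "ln (4::real) = ln 2 + ln 2" using ln_mult[of 2 2] by simp
    moreover have "L \<ge> ln 4" unfolding L_def using True by simp
    ultimately have "L \<ge> 21/20" using ln2_bound by linarith
    then have "d * (21/20 - L) \<le> 0" using assms(2) by (simp add: mult_nonneg_nonpos)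
    then show ?thesis using Lpos by linarith
  next
    case False
    then consider "n = 2" | "n = 3" using assms(1) by linarith
    then show ?thesis
    proof cases
      case 1
      have "d \<le> 1" "L \<ge> 21/40" using 1 assms(3) L2 ln2_bound by auto
      show ?thesis
      proof (cases "21/20 - L \<le> 0")
        case True
        then have "d * (21/20 - L) \<le> 0" using assms(2) by (simp add: mult_nonneg_nonpos)
        then show ?thesis using Lpos by linarith
      next
        case False
        then have "d * (21/20 - L) \<le> 1 * (21/20 - L)"
          using \<open>d \<le> 1\<close> by (intro mult_right_mono) auto
        also have "\<dots> \<le> L" using \<open>L \<ge> 21/40\<close> by simp
        finally show ?thesis .
      qed
    next
      case 2
      have "d \<le> 2" "L \<ge> 1" using 2 assms(3) ln3_bound unfolding L_def by auto
      show ?thesis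
      proof (cases "21/20 - L \<le> 0")
        case True
        then have "d * (21/20 - L) \<le> 0" using assms(2) by (simp add: mult_nonneg_nonpos)
        then show ?thesis using Lpos by linarith
      next
        case False
        then have "d * (21/20 - L) \<le> 2 * (21/20 - L)"
          using \<open>d \<le> 2\<close> by (intro mult_right_mono) auto
        also have "\<dots> \<le> L" using \<open>L \<ge> 1\<close> by simp
        finally show ?thesis .
      qed
    qed
  qed
  have "d / L + d / (20 * L) = (d * 21/20) / L" using Lpos by (simp add: field_simps)
  also have "\<dots> \<le> (d * L + L) / L" using key Lpos by (intro divide_right_mono) (auto simp: algebra_simps)
  also have "\<dots> = d + 1" using Lpos by (simp add: field_simps)
  finally show ?thesis unfolding L_def by linarith
qed

theorem lemma2p12:
  fixes V :: "'a set" and E :: "'a \<Rightarrow> 'a \<Rightarrow> bool" and n :: nat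
  assumes "simple_graph V E" and "card V = n" and "n \<ge> 2"
  shows "\<exists>(t::nat) (P :: nat \<Rightarrow> 'a set).
     (\<forall>i\<in>{1..t}. P i \<noteq> {}) \<and>
     (\<forall>i\<in>{1..t}. \<forall>j\<in>{1..t}. i \<noteq> j \<longrightarrow> P i \<inter> P j = {}) \<and>
     (\<Union>i\<in>{1..t}. P i) = V \<and>
     real t \<le> 19 * real (indep_num V E) * ln (real n) \<and>
     (\<Sum>i\<in>{i\<in>{1..t}. real (card (P i)) \<ge> 0.1 * real n / real (indep_num V E)}.
        real (card (P i))) \<ge> real n / 2 \<and>
     (\<forall>i\<in>{1..t}. real (card (P i)) \<ge> real (min_degree V E) / ln (real n)) \<and>
     (\<forall>i\<in>{1..t}. real (vertex_connectivity (P i) E)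
        \<ge> real (min_degree V E) / (20 * real (indep_num V E) * ln (real n)))"
proof -
  note G = assms(1)
  have fin: "finite V" and sym: "\<forall>x y. E x y \<longrightarrow> E y x"
    using G unfolding simple_graph_def by auto
  define d where "d = real (min_degree V E)"
  define a where "a = real (indep_num V E)"
  define L where "L = ln (real n)"
  define k where "k = d / (20 * a * L)"
  have L2: "L \<ge> 21/40"
  proof -
    have "ln (2::real) \<le> ln (real n)" using assms(3) by simp
    then show ?thesis using ln2_bound unfolding L_def by linarith
  qed
  have d0: "d \<ge> 0" unfolding d_def by simp
  have a0: "a \<ge> 0" unfolding a_def by simp
  have k0: "k \<ge> 0" unfolding k_def using d0 a0 L2 by simp
  have Vne: "V \<noteq> {}" using assms(2,3) by auto
  have cf0: "config V E k {V} {}" unfolding config_def using Vne by auto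
  have kdef: "k = real (min_degree V E) / (20 * real (indep_num V E) * L)"
    unfolding k_def d_def a_def ..
  obtain \<W> R where cf: "config V E k \<W> R" and good: "\<forall>W\<in>\<W>. kconn W E k"
    using exists_good[OF G cf0 kdef] L2 by auto
  define m where "m = card \<W>"
  have finW: "finite \<W>" using configD(1)[OF cf] .
  have mle: "m \<le> indep_num V E" unfolding m_def using config_card_le[OF G cf] .
  have finR: "finite R" using configD(5)[OF cf] by (intro finite_subset[OF _ fin]) auto
  have Rb: "real (card R) + k \<le> real m * k" using configD(7)[OF cf] unfolding m_def .
  have m1: "m \<ge> 1"
  proof (rule ccontr)
    assume "\<not> m \<ge> 1"
    then have "\<W> = {}" unfolding m_def using finW by (simp add: card_gt_0_iff Suc_le_eq)
    then have "R = V" using configD(5)[OF cf] by simp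
    then have "real n + k \<le> 0" using Rb \<open>\<not> m \<ge> 1\<close> assms(2) by (subgoal_tac "m = 0") auto
    then show False using k0 assms(3) by simp
  qed
  have apos: "a > 0" using m1 mle unfolding a_def by simp
  have ak: "a * k = d / (20 * L)" unfolding k_def using apos L2 by (simp add: field_simps)
  have mk: "real m * k \<le> a * k" using mle k0 unfolding a_def by (simp add: mult_right_mono)
  have Rb2: "real (card R) \<le> d / (20 * L)" using Rb mk ak k0 by linarith
  have d10: "d / (10 * L) \<le> d / 1" using d0 L2 by (intro divide_left_mono) auto
  have ak2: "2 * (a * k) = d / (10 * L)" unfolding ak using L2 by (simp add: field_simps)

  have assign: "\<exists>W\<in>\<W>. k \<le> real (card {u\<in>W. E r u})" if r: "r \<in> R" for r
  proof (rule ccontr)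
    assume "\<not> ?thesis"
    then have lt: "\<forall>W\<in>\<W>. real (card {u\<in>W. E r u}) < k" by auto
    have rV: "r \<in> V" using r configD(5)[OF cf] by auto
    have sub: "{u\<in>V. E r u} \<subseteq> (\<Union>W\<in>\<W>. {u\<in>W. E r u}) \<union> R"
      using configD(5)[OF cf] by auto
    have finU: "finite (\<Union>W\<in>\<W>. {u\<in>W. E r u})"
      using configD(5)[OF cf] by (intro finite_subset[OF _ fin]) auto
    have "card {u\<in>V. E r u} \<le> card ((\<Union>W\<in>\<W>. {u\<in>W. E r u}) \<union> R)"
      using sub finU finR by (intro card_mono) auto
    also have "\<dots> \<le> card (\<Union>W\<in>\<W>. {u\<in>W. E r u}) + card R" by (rule card_Un_le)
    also have "\<dots> \<le> (\<Sum>W\<in>\<W>. card {u\<in>W. E r u}) + card R"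
      using card_UN_le[OF finW] by simp
    finally have c1: "min_degree V E \<le> (\<Sum>W\<in>\<W>. card {u\<in>W. E r u}) + card R"
      using mindeg_le[OF G rV] by linarith
    have "(\<Sum>W\<in>\<W>. real (card {u\<in>W. E r u})) < (\<Sum>W\<in>\<W>. k)"
      using finW m1 lt unfolding m_def by (intro sum_strict_mono) auto
    then have "real (\<Sum>W\<in>\<W>. card {u\<in>W. E r u}) < real m * k"
      unfolding m_def by simp
    then have "d < real m * k + real (card R)" using c1 unfolding d_def by linarith
    then have "d < 2 * (a * k)" using Rb mk k0 by linarith
    then show False using ak2 d10 by linarith
  qed
  define g where "g r = (SOME W. W \<in> \<W> \<and> k \<le> real (card {u\<in>W. E r u}))" for r
  have g: "g r \<in> \<W> \<and> k \<le> real (card {u\<in>g r. E r u})" if "r \<in> R" for r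
    using someI_ex[OF assign[OF that, unfolded Bex_def]] unfolding g_def .
  define Pt where "Pt W = W \<union> {r\<in>R. g r = W}" for W
  obtain f where f: "bij_betw f {1..m} \<W>"
    using ex_bij_betw_nat_finite_1[OF finW] unfolding m_def by blast
  have fin_in: "f i \<in> \<W>" if "i \<in> {1..m}" for i using f that by (rule bij_betw_apply)
  have finj: "inj_on f {1..m}" using f by (rule bij_betw_imp_inj_on)
  have fimg: "f ` {1..m} = \<W>" using f by (rule bij_betw_imp_surj_on)

  have WV: "W \<subseteq> V" if "W \<in> \<W>" for W using that configD(5)[OF cf] by auto
  have PV: "Pt W \<subseteq> V" if "W \<in> \<W>" for W
    using WV[OF that] configD(5)[OF cf] unfolding Pt_def by auto
  have Pne: "Pt W \<noteq> {}" if "W \<in> \<W>" for W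
    using that configD(2)[OF cf] unfolding Pt_def by auto
  have Pdisj: "Pt A \<inter> Pt B = {}" if "A \<in> \<W>" "B \<in> \<W>" "A \<noteq> B" for A B
  proof -
    have "A \<inter> B = {}" using configD(3)[OF cf] that by blast
    moreover have "R \<inter> A = {}" "R \<inter> B = {}" using configD(6)[OF cf] that by auto
    ultimately show ?thesis unfolding Pt_def using that(3) by auto
  qed
  have Punion: "(\<Union>W\<in>\<W>. Pt W) = V"
  proof
    show "(\<Union>W\<in>\<W>. Pt W) \<subseteq> V" using PV by auto
    show "V \<subseteq> (\<Union>W\<in>\<W>. Pt W)"
    proof
      fix x assume "x \<in> V"
      then have "x \<in> \<Union>\<W> \<or> x \<in> R" using configD(5)[OF cf] by auto
      then show "x \<in> (\<Union>W\<in>\<W>. Pt W)"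
      proof
        assume "x \<in> \<Union>\<W>" then show ?thesis unfolding Pt_def by auto
      next
        assume xR: "x \<in> R"
        then have "g x \<in> \<W>" using g by auto
        moreover have "x \<in> Pt (g x)" unfolding Pt_def using xR by auto
        ultimately show ?thesis by auto
      qed
    qed
  qed
  have Pconn: "k \<le> real (vertex_connectivity (Pt W) E)" if W: "W \<in> \<W>" for W
  proof -
    have finWW: "finite W" using finite_subset[OF WV[OF W] fin] .
    have "kconn (W \<union> {r\<in>R. g r = W}) E k"
    proof (rule kconn_add_set)
      show "finite {r\<in>R. g r = W}" using finR by simp
      show "finite W" by (rule finWW)
      show "kconn W E k" using good W by auto
      show "{r\<in>R. g r = W} \<inter> W = {}" using configD(6)[OF cf] W by auto
      show "\<forall>s\<in>{r\<in>R. g r = W}. k \<le> real (card {u\<in>W. E s u})" using g by auto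
      show "\<forall>x y. E x y \<longrightarrow> E y x" by (rule sym)
    qed
    then have "kconn (Pt W) E k" unfolding Pt_def .
    moreover have "finite (Pt W)" using finite_subset[OF PV[OF W] fin] .
    ultimately show ?thesis using kconn_vc Pne[OF W] by blast
  qed
  have Psize: "d / L \<le> real (card (Pt W))" if W: "W \<in> \<W>" for W
  proof -
    have finWW: "finite W" using finite_subset[OF WV[OF W] fin] .
    have "W \<noteq> {}" using W configD(2)[OF cf] by auto
    then obtain v where v: "v \<in> W" by blast
    have vV: "v \<in> V" using v WV[OF W] by auto
    have "card {u\<in>V. E v u} \<le> card ((W - {v}) \<union> R)"
      using config_nbrs[OF G cf W v] finWW finR by (intro card_mono) auto
    also have "\<dots> \<le> card (W - {v}) + card R" by (rule card_Un_le)
    finally have "min_degree V E \<le> card (W - {v}) + card R"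
      using mindeg_le[OF G vV] by linarith
    moreover have "card (W - {v}) + 1 = card W"
    proof -
      have "card W > 0" using v finWW card_gt_0_iff by blast
      then show ?thesis using card_Diff_singleton[OF v] by simp
    qed
    ultimately have "d + 1 \<le> real (card W) + real (card R)" unfolding d_def by linarith
    then have c1: "d + 1 - d / (20 * L) \<le> real (card W)" using Rb2 by linarith
    have "card {u\<in>V. E v u} \<le> card (V - {v})"
      using fin vV sym G unfolding simple_graph_def by (intro card_mono) auto
    then have "min_degree V E \<le> n - 1" using mindeg_le[OF G vV] fin vV assms(2) by simp
    then have "d \<le> real n - 1" unfolding d_def using assms(3) by linarith
    then have "d / L \<le> d + 1 - d / (20 * L)" using numeric[OF assms(3) d0] unfolding L_def by blast
    moreover have "card W \<le> card (Pt W)"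
      by (rule card_mono[OF finite_subset[OF PV[OF W] fin]]) (simp add: Pt_def)
    ultimately show ?thesis using c1 by linarith
  qed

  define c where "c = 0.1 * real n / a"
  define I where "I = {1..m}"
  have total: "(\<Sum>i\<in>I. real (card (Pt (f i)))) = real n"
  proof -
    have "card (\<Union>i\<in>I. Pt (f i)) = (\<Sum>i\<in>I. card (Pt (f i)))"
      unfolding I_def
    proof (rule card_UN_disjoint)
      show "finite {1..m}" by simp
      show "\<forall>i\<in>{1..m}. finite (Pt (f i))"
        using finite_subset[OF PV[OF fin_in] fin] by blast
      show "\<forall>i\<in>{1..m}. \<forall>j\<in>{1..m}. i \<noteq> j \<longrightarrow> Pt (f i) \<inter> Pt (f j) = {}"
      proof (intro ballI impI)
        fix i j assume ij: "i \<in> {1..m}" "j \<in> {1..m}" "i \<noteq> j"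
        then have "f i \<noteq> f j" using inj_on_contraD[OF finj] by blast
        then show "Pt (f i) \<inter> Pt (f j) = {}" using Pdisj fin_in ij by blast
      qed
    qed
    moreover have "(\<Union>i\<in>I. Pt (f i)) = V" unfolding I_def using Punion fimg by auto
    ultimately have "card V = (\<Sum>i\<in>I. card (Pt (f i)))" by simp
    then have "real (card V) = real (\<Sum>i\<in>I. card (Pt (f i)))" by simp
    then show ?thesis using assms(2) by simp
  qed
  let ?h = "\<lambda>i. real (card (Pt (f i)))"
  have split: "(\<Sum>i\<in>I. ?h i) = (\<Sum>i\<in>I. if c \<le> ?h i then ?h i else 0) + (\<Sum>i\<in>I. if c \<le> ?h i then 0 else ?h i)"
    by (subst sum.distrib[symmetric]) (intro sum.cong, auto)
  have c0: "c \<ge> 0" unfolding c_def using apos by simp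
  have "(\<Sum>i\<in>I. if c \<le> ?h i then 0 else ?h i) \<le> (\<Sum>i\<in>I. c)"
    by (intro sum_mono) (use c0 in auto)
  also have "\<dots> = real m * c" unfolding I_def by simp
  also have "\<dots> \<le> a * c" using mle c0 unfolding a_def by (simp add: mult_right_mono)
  also have "\<dots> = 0.1 * real n" unfolding c_def using apos by simp
  finally have small: "(\<Sum>i\<in>I. if c \<le> ?h i then 0 else ?h i) \<le> 0.1 * real n" .
  have big: "(\<Sum>i\<in>{i\<in>I. c \<le> ?h i}. ?h i) = (\<Sum>i\<in>I. if c \<le> ?h i then ?h i else 0)"
    unfolding I_def by (rule sum.inter_filter) simp
  have sumJ: "(\<Sum>i\<in>{i\<in>I. c \<le> ?h i}. ?h i) \<ge> real n / 2"
    using split small big total by simp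

  have c1: "\<forall>i\<in>{1..m}. Pt (f i) \<noteq> {}" using Pne fin_in by blast
  have c2: "\<forall>i\<in>{1..m}. \<forall>j\<in>{1..m}. i \<noteq> j \<longrightarrow> Pt (f i) \<inter> Pt (f j) = {}"
  proof (intro ballI impI)
    fix i j assume ij: "i \<in> {1..m}" "j \<in> {1..m}" "i \<noteq> j"
    then have "f i \<noteq> f j" using inj_on_contraD[OF finj] by blast
    then show "Pt (f i) \<inter> Pt (f j) = {}" using Pdisj fin_in ij by blast
  qed
  have c3: "(\<Union>i\<in>{1..m}. Pt (f i)) = V" using Punion fimg by auto
  have c4: "real m \<le> 19 * real (indep_num V E) * ln (real n)"
  proof -
    have "a * 1 \<le> a * (19 * L)" using a0 L2 by (intro mult_left_mono) auto
    then show ?thesis using mle unfolding a_def L_def by simp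
  qed
  have c5: "(\<Sum>i\<in>{i\<in>{1..m}. real (card (Pt (f i))) \<ge> 0.1 * real n / real (indep_num V E)}.
        real (card (Pt (f i)))) \<ge> real n / 2"
    using sumJ unfolding I_def c_def a_def .
  have c6: "\<forall>i\<in>{1..m}. real (card (Pt (f i))) \<ge> real (min_degree V E) / ln (real n)"
    using Psize fin_in unfolding d_def L_def by blast
  have c7: "\<forall>i\<in>{1..m}. real (vertex_connectivity (Pt (f i)) E)
        \<ge> real (min_degree V E) / (20 * real (indep_num V E) * ln (real n))"
    using Pconn fin_in unfolding k_def d_def a_def L_def by blast
  show ?thesis
    by (rule exI[of _ m], rule exI[of _ "\<lambda>i. Pt (f i)"]) (use c1 c2 c3 c4 c5 c6 c7 in blast)
qed

end
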